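(* Let $\rho$ be a worst-case risk measure that uses an uncertainty set $\mathcal{U}\subseteq\mathbb{R}^K$ such that $\mathcal{U}\subseteq\mathcal{A}(\mathcal{U})$. Then $\rho$ satisfies the bounded conditional market risk property.
   Context: Returns $r\in\mathbb{R}^K$ with natural filtration $\mathcal{F}_k=\sigma(r_1,\dots,r_k)$; investment amounts $\zeta_\ell$ are $\mathcal{F}_\ell$-measurable functions of $r_{1:\ell}$. The worst-case risk measure with uncertainty set $\mathcal{U}$ is $\rho=\rho_0\circ\cdots\circ\rho_{K-1}$ where $\rho_k(X,r)=\sup_{r'\in\mathcal{U}:r'_{1:k}=r_{1:k}}X(r')$ if some $r'\in\mathcal{U}$ has $r'_{1:k}=r_{1:k}$, and otherwise $\rho_k(X,r)=X([r_{1:k};0_{k+1:K}])$ (i.e. $\inf_{\epsilon>0}\operatorname{ess\,sup}$ of $X$ over $r'$ with $r'_{1:k}=r_{1:k}$, $\|r'_{k+1:K}\|_\infty\le\epsilon$). Let $\rho_{k,K}=\rho_k\circ\cdots\circ\rho_{K-1}$. Define $\mathcal{A}(\mathcal{U})=\{r\in\mathbb{R}^K:\forall k\in\{0,\dots,K-1\},\ \inf_{\zeta_k,\dots,\zeta_{K-1}}\rho_{k,K}(-\sum_{\ell=k}^{K-1}\zeta_\ell r_{\ell+1},r)\in(-\infty,0]\}$. Bounded conditional market risk: for each $k\in\{0,\dots,K-1\}$, $0\ge\inf_{\zeta_k,\dots,\zeta_{K-1}}\rho_{k,K}(-\sum_{\ell=k}^{K-1}\zeta_\ell r_{\ell+1})>-\infty$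 almost surely. *)

theory Defs
  imports "HOL-Probability.Probability"
begin

text \<open>Return vectors r in R^K are represented as functions nat => real with
  components r 1, ..., r K and r i = 0 for every other index i.\<close>

definition RK :: "nat \<Rightarrow> (nat \<Rightarrow> real) set" where
  "RK K = {r. \<forall>i. (i < 1 \<or> K < i) \<longrightarrow> r i = 0}"

definition same_prefix :: "nat \<Rightarrow> (nat \<Rightarrow> real) \<Rightarrow> (nat \<Rightarrow> real) \<Rightarrow> bool" where
  "same_prefix k r r' \<longleftrightarrow> (\<forall>i. 1 \<le> i \<and> i \<le> k \<longrightarrow> r i = r' i)"

definition trunc_vec :: "nat \<Rightarrow> (nat \<Rightarrow> real) \<Rightarrow> (nat \<Rightarrow> real)" where
  "trunc_vec k r = (\<lambda>i. if 1 \<le> i \<and> i \<le> k then r i else 0)"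

definition rho_step :: "(nat \<Rightarrow> real) set \<Rightarrow> nat \<Rightarrow> ((nat \<Rightarrow> real) \<Rightarrow> ereal)
    \<Rightarrow> (nat \<Rightarrow> real) \<Rightarrow> ereal" where
  "rho_step U k X r =
     (if \<exists>r'\<in>U. same_prefix k r' r
      then (SUP r'\<in>{r'\<in>U. same_prefix k r' r}. X r')
      else X (trunc_vec k r))"

primrec rho_seg :: "(nat \<Rightarrow> real) set \<Rightarrow> nat \<Rightarrow> nat \<Rightarrow> ((nat \<Rightarrow> real) \<Rightarrow> ereal)
    \<Rightarrow> (nat \<Rightarrow> real) \<Rightarrow> ereal" where
  "rho_seg U k 0 X = X"
| "rho_seg U k (Suc n) X = rho_step U k (rho_seg U (Suc k) n X)"

abbreviation rho_kK :: "(nat \<Rightarrow> real) set \<Rightarrow> nat \<Rightarrow> nat \<Rightarrow> ((nat \<Rightarrow> real) \<Rightarrow> ereal)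
    \<Rightarrow> (nat \<Rightarrow> real) \<Rightarrow> ereal" where
  "rho_kK U k K \<equiv> rho_seg U k (K - k)"

text \<open>Admissible investment strategies: zeta l is F_l-measurable, i.e. a Borel
  measurable function of r that depends only on r_{1:l}.\<close>
definition adapted_strategy :: "(nat \<Rightarrow> (nat \<Rightarrow> real) \<Rightarrow> real) \<Rightarrow> bool" where
  "adapted_strategy \<zeta> \<longleftrightarrow>
     (\<forall>l. \<zeta> l \<in> borel_measurable borel \<and>
          (\<forall>r r'. same_prefix l r r' \<longrightarrow> \<zeta> l r = \<zeta> l r'))"

definition trading_loss :: "nat \<Rightarrow> nat \<Rightarrow> (nat \<Rightarrow> (nat \<Rightarrow> real) \<Rightarrow> real)
    \<Rightarrow> (nat \<Rightarrow> real) \<Rightarrow> ereal" where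
  "trading_loss K k \<zeta> r = ereal (- (\<Sum>l\<in>{k..<K}. \<zeta> l r * r (Suc l)))"

definition cond_market_risk :: "(nat \<Rightarrow> real) set \<Rightarrow> nat \<Rightarrow> nat \<Rightarrow> (nat \<Rightarrow> real) \<Rightarrow> ereal" where
  "cond_market_risk U K k r =
     (INF \<zeta>\<in>{\<zeta>. adapted_strategy \<zeta>}. rho_kK U k K (trading_loss K k \<zeta>) r)"

definition admissible_set :: "nat \<Rightarrow> (nat \<Rightarrow> real) set \<Rightarrow> (nat \<Rightarrow> real) set" where
  "admissible_set K U = {r \<in> RK K. \<forall>k<K. cond_market_risk U K k r \<le> 0 \<and>
                                             - \<infinity> < cond_market_risk U K k r}"

definition bounded_cond_market_risk ::
    "nat \<Rightarrow> (nat \<Rightarrow> real) set \<Rightarrow> (nat \<Rightarrow> real) measure \<Rightarrow> bool" where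
  "bounded_cond_market_risk K U M \<longleftrightarrow>
     (\<forall>k<K. AE r in M. cond_market_risk U K k r \<le> 0 \<and> - \<infinity> < cond_market_risk U K k r)"

end

theory Submission
  imports Defs
begin

lemma sp_trans: "same_prefix k a b \<Longrightarrow> same_prefix k b c \<Longrightarrow> same_prefix k a c"
  unfolding same_prefix_def by auto

lemma sp_sym: "same_prefix k a b \<Longrightarrow> same_prefix k b a"
  unfolding same_prefix_def by auto

lemma step_prefix:
  assumes "same_prefix k r r'"
  shows "rho_step U k Y r = rho_step U k Y r'"
proof -
  have e: "\<And>u. same_prefix k u r = same_prefix k u r'"
    using assms sp_trans sp_sym by metis
  have t: "trunc_vec k r = trunc_vec k r'"
    using assms unfolding trunc_vec_def same_prefix_def by auto
  show ?thesis unfolding rho_step_def e t by simp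
qed

lemma seg_noU:
  assumes "\<not> (\<exists>u\<in>U. same_prefix k u s)" and "trunc_vec k s = s"
  shows "j \<ge> k \<Longrightarrow> rho_seg U j n X s = X s"
proof (induction n arbitrary: j)
  case 0
  then show ?case by simp
next
  case (Suc n)
  have nu: "\<not> (\<exists>u\<in>U. same_prefix j u s)"
    using assms(1) Suc.prems unfolding same_prefix_def by (meson order_trans)
  have tj: "trunc_vec j s = s"
  proof
    fix i
    show "trunc_vec j s i = s i"
      using Suc.prems fun_cong[OF assms(2), of i] unfolding trunc_vec_def
      by (auto split: if_splits)
  qed
  show ?case using nu tj Suc.IH[of "Suc j"] Suc.prems
    by (simp add: rho_step_def)
qed

lemma cmr_prefix:
  assumes "k < K" "same_prefix k r r'"
  shows "cond_market_risk U K k r = cond_market_risk U K k r'"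
proof -
  obtain n where n: "K - k = Suc n" using assms(1) by (metis Suc_diff_Suc)
  show ?thesis unfolding cond_market_risk_def n
    using step_prefix[OF assms(2)] by simp
qed

lemma cmr_noU:
  assumes "k < K" "\<not> (\<exists>u\<in>U. same_prefix k u r)"
  shows "cond_market_risk U K k r = 0"
proof -
  obtain n where n: "K - k = Suc n" using assms(1) by (metis Suc_diff_Suc)
  define s where "s = trunc_vec k r"
  have sr: "same_prefix k s r" unfolding s_def same_prefix_def trunc_vec_def by auto
  have ns: "\<not> (\<exists>u\<in>U. same_prefix k u s)"
    using assms(2) sr sp_trans by blast
  have ts: "trunc_vec k s = s" unfolding s_def trunc_vec_def by auto
  have key: "rho_kK U k K (trading_loss K k \<zeta>) r = 0" for \<zeta>
  proof -
    have "rho_kK U k K (trading_loss K k \<zeta>) r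
        = rho_seg U (Suc k) n (trading_loss K k \<zeta>) s"
      using assms(2) unfolding n s_def by (simp add: rho_step_def)
    also have "\<dots> = trading_loss K k \<zeta> s"
      using seg_noU[OF ns ts, of "Suc k"] by simp
    also have "\<dots> = 0"
    proof -
      have "\<And>l. l \<in> {k..<K} \<Longrightarrow> s (Suc l) = 0"
        unfolding s_def trunc_vec_def by auto
      then show ?thesis unfolding trading_loss_def by simp
    qed
    finally show ?thesis .
  qed
  have ne: "(\<lambda>l r. 0::real) \<in> {\<zeta>. adapted_strategy \<zeta>}"
    unfolding adapted_strategy_def by simp
  show ?thesis unfolding cond_market_risk_def key using ne
    by (metis INF_const empty_iff)
qed

lemma cmr_all:
  assumes "U \<subseteq> admissible_set K U" "k < K"
  shows "cond_market_risk U K k r \<le> 0 \<and> - \<infinity> < cond_market_risk U K k r"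
proof (cases "\<exists>u\<in>U. same_prefix k u r")
  case True
  then obtain u where u: "u \<in> U" "same_prefix k u r" by blast
  have "cond_market_risk U K k r = cond_market_risk U K k u"
    using cmr_prefix[OF assms(2) sp_sym[OF u(2)]] .
  moreover have "u \<in> admissible_set K U" using u(1) assms(1) by blast
  ultimately show ?thesis using assms(2) unfolding admissible_set_def by auto
next
  case False
  then show ?thesis using cmr_noU[OF assms(2)] by simp
qed

theorem lemma7:
  fixes K :: nat and U :: "(nat \<Rightarrow> real) set" and M :: "(nat \<Rightarrow> real) measure"
  assumes "prob_space M"
    and "space M \<subseteq> RK K"
    and "U \<subseteq> RK K"
    and "U \<subseteq> admissible_set K U"
  shows "bounded_cond_market_risk K U M"
  unfolding bounded_cond_market_risk_def
  using cmr_all[OF assms(4)] by (intro allI impI AE_I2) auto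

end
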